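(* Let $\mathbf{M}$ be a nonsingular $D\times D$ integer matrix and $\bm{\Gamma}_1,\dots,\bm{\Gamma}_L$ ($L\ge2$) nonsingular $D\times D$ integer matrices that are pairwise commutative and coprime; set $\mathbf{M}_i=\mathbf{M}\bm{\Gamma}_i$. Fix unimodular $\mathbf{U}_1$ and let $\mathbf{m}\in\mathcal{A}_1$ with remainders $\mathbf{r}_i=\langle\mathbf{m}\rangle_{\mathbf{M}_i}$ and folding vectors $\mathbf{n}_i$ (so $\mathbf{m}=\mathbf{M}_i\mathbf{n}_i+\mathbf{r}_i$). Let $\widetilde{\mathbf{r}}_i=\mathbf{r}_i+\triangle\mathbf{r}_i\in\mathbb{Z}^D$ be erroneous remainders, and let $\widetilde{\mathbf{n}}_1,\dots,\widetilde{\mathbf{n}}_L$ be the output of Algorithm 1 applied to $\widetilde{\mathbf{r}}_1,\dots,\widetilde{\mathbf{r}}_L$. Define $\bm{\theta}_i=Q_{\mathbf{M}}(\triangle\mathbf{r}_i-\triangle\mathbf{r}_1)$ for $2\le i\le L$. Then $\widetilde{\mathbf{n}}_i=\mathbf{n}_i$ for all $1\le i\le L$ if and only if $\bm{\theta}_i=\mathbf{0}$ for all $2\le i\le L$. Moreover: (1) if $\lVert\triangle\mathbf{r}_i-\triangle\mathbf{r}_1\rVert<\lambda_{\mathrm{LAT}(\mathbf{M})}/2$ for all $2\le i\le L$, then $\bm{\theta}_i=\mathbf{0}$ for all $i\ge2$; (2) if $\lVert\triangle\mathbf{r}_i\rVert\le\tau$ for all $i$ and $\tau<\lambda_{\mathrm{LAT}(\mathbf{M})}/4$,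 then $\bm{\theta}_i=\mathbf{0}$ for all $i\ge2$. When the folding vectors are correctly determined, $\widetilde{\mathbf{m}}=\frac1L\sum_{i=1}^L(\mathbf{M}_i\mathbf{n}_i+\widetilde{\mathbf{r}}_i)$ satisfies $\lVert\widetilde{\mathbf{m}}-\mathbf{m}\rVert\le\tau$ whenever $\lVert\triangle\mathbf{r}_i\rVert\le\tau$ for all $i$.
   Context: All matrices are $D\times D$; unimodular means integer with determinant $\pm1$; commuting nonsingular integer matrices are coprime if all their common left (equivalently right) divisors are unimodular. $\mathrm{LAT}(\mathbf{M})=\{\mathbf{M}\mathbf{n}:\mathbf{n}\in\mathbb{Z}^D\}$. $\mathcal{N}(\mathbf{A})=\{\mathbf{k}\in\mathbb{Z}^D:\mathbf{k}=\mathbf{A}\mathbf{x},\ \mathbf{x}\in[0,1)^D\}$; $\langle\mathbf{m}\rangle_{\mathbf{A}}$ is the unique $\mathbf{r}\in\mathcal{N}(\mathbf{A})$ with $\mathbf{m}-\mathbf{r}\in\mathrm{LAT}(\mathbf{A})$; $\mathbf{x}\equiv\mathbf{y}\bmod\mathbf{A}$ means $\mathbf{x}-\mathbf{y}\in\mathrm{LAT}(\mathbf{A})$. $\mathcal{A}_1=\{\mathbf{m}\in\mathbb{Z}^D:\lfloor\mathbf{M}_1^{-1}\mathbf{m}\rfloor\in\mathcal{N}(\bm{\Gamma}_2\bm{\Gamma}_3\cdots\bm{\Gamma}_L\mathbf{U}_1)\}$ (componentwise floor). $\lVert\cdot\rVert$ is a fixed norm on $\mathbb{R}^D$; $\lambda_{\mathrm{LAT}(\mathbf{M})}=\min\{\lVert\mathbf{v}\rVert:\mathbf{v}\in\mathrm{LAT}(\mathbf{M})\setminus\{\mathbf{0}\}\}$.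 $Q_{\mathbf{M}}:\mathbb{R}^D\to\mathrm{LAT}(\mathbf{M})$ is a fixed closest-lattice-point map, $Q_{\mathbf{M}}(\mathbf{w})\in\arg\min_{\mathbf{v}\in\mathrm{LAT}(\mathbf{M})}\lVert\mathbf{v}-\mathbf{w}\rVert$, chosen so that $Q_{\mathbf{M}}(\mathbf{w}+\mathbf{l})=Q_{\mathbf{M}}(\mathbf{w})+\mathbf{l}$ for $\mathbf{l}\in\mathrm{LAT}(\mathbf{M})$. Algorithm 1: (i) $\mathbf{v}_i=Q_{\mathbf{M}}(\widetilde{\mathbf{r}}_i-\widetilde{\mathbf{r}}_1)$, $2\le i\le L$; (ii) $\bm{\zeta}_i=\langle\mathbf{M}^{-1}\mathbf{v}_i\rangle_{\bm{\Gamma}_i}$; (iii) $\bm{\chi}_1$ is the unique element of $\mathcal{N}(\bm{\Gamma}_1\bm{\Gamma}_2\cdots\bm{\Gamma}_L\mathbf{U}_1)$ with $\bm{\chi}_1\equiv\mathbf{0}\bmod\bm{\Gamma}_1$ and $\bm{\chi}_1\equiv\bm{\zeta}_i\bmod\bm{\Gamma}_i$ for $2\le i\le L$; (iv) $\widetilde{\mathbf{n}}_1=\bm{\Gamma}_1^{-1}\bm{\chi}_1$ and $\widetilde{\mathbf{n}}_i=\bm{\Gamma}_i^{-1}(\bm{\chi}_1-\mathbf{M}^{-1}\mathbf{v}_i)$ for $2\le i\le L$. *)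

theory Defs
  imports "HOL-Analysis.Analysis"
begin

text \<open>Integer D x D matrices are int^'d^'d, integer vectors int^'d (D = CARD('d)).\<close>

definition rvec :: "int^'d \<Rightarrow> real^'d" where
  "rvec v = (\<chi> i. real_of_int (v $ i))"

definition rmat :: "int^'d^'d \<Rightarrow> real^'d^'d" where
  "rmat A = (\<chi> i j. real_of_int (A $ i $ j))"

definition nonsingular :: "int^'d^'d \<Rightarrow> bool" where
  "nonsingular A \<longleftrightarrow> det A \<noteq> 0"

definition unimodular :: "int^'d^'d \<Rightarrow> bool" where
  "unimodular U \<longleftrightarrow> det U = 1 \<or> det U = -1"

definition coprime_mat :: "int^'d^'d \<Rightarrow> int^'d^'d \<Rightarrow> bool" where
  "coprime_mat A B \<longleftrightarrow>
     (\<forall>Dv X Y. A = Dv ** X \<and> B = Dv ** Y \<longrightarrow> unimodular Dv)"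

definition LAT :: "int^'d^'d \<Rightarrow> (int^'d) set" where
  "LAT A = {A *v n | n. True}"

definition NN :: "int^'d^'d \<Rightarrow> (int^'d) set" where
  "NN A = {k. \<exists>x::real^'d. (\<forall>j. 0 \<le> x $ j \<and> x $ j < 1) \<and> rvec k = rmat A *v x}"

definition congr_mod :: "int^'d \<Rightarrow> int^'d \<Rightarrow> int^'d^'d \<Rightarrow> bool" where
  "congr_mod x y A \<longleftrightarrow> x - y \<in> LAT A"

definition remd :: "int^'d \<Rightarrow> int^'d^'d \<Rightarrow> int^'d" where
  "remd m A = (THE r. r \<in> NN A \<and> m - r \<in> LAT A)"

text \<open>Ordered product Gamma a ** Gamma (a+1) ** ... ** Gamma b (identity if b < a).\<close>
definition mprod :: "(nat \<Rightarrow> int^'d^'d) \<Rightarrow> nat \<Rightarrow> nat \<Rightarrow> int^'d^'d" where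
  "mprod G a b = foldr (\<lambda>i A. G i ** A) [a..<Suc b] (mat 1)"

definition A1set :: "int^'d^'d \<Rightarrow> (nat \<Rightarrow> int^'d^'d) \<Rightarrow> nat \<Rightarrow> int^'d^'d \<Rightarrow> (int^'d) set" where
  "A1set M G L U1 = {m. (\<chi> j. \<lfloor>(matrix_inv (rmat (M ** G 1)) *v rvec m) $ j\<rfloor>)
                          \<in> NN (mprod G 2 L ** U1)}"

definition is_norm :: "(real^'d \<Rightarrow> real) \<Rightarrow> bool" where
  "is_norm nrm \<longleftrightarrow> (\<forall>x. nrm x = 0 \<longleftrightarrow> x = 0) \<and> (\<forall>a x. nrm (a *\<^sub>R x) = \<bar>a\<bar> * nrm x)
      \<and> (\<forall>x y. nrm (x + y) \<le> nrm x + nrm y)"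

definition lat_min :: "(real^'d \<Rightarrow> real) \<Rightarrow> int^'d^'d \<Rightarrow> real" where
  "lat_min nrm M = Inf {nrm (rvec v) | v. v \<in> LAT M \<and> v \<noteq> 0}"

definition is_closest_map :: "(real^'d \<Rightarrow> real) \<Rightarrow> int^'d^'d \<Rightarrow> (real^'d \<Rightarrow> real^'d) \<Rightarrow> bool" where
  "is_closest_map nrm M Q \<longleftrightarrow>
     (\<forall>w. Q w \<in> rvec ` LAT M) \<and>
     (\<forall>w. \<forall>v\<in>LAT M. nrm (Q w - w) \<le> nrm (rvec v - w)) \<and>
     (\<forall>w l. l \<in> LAT M \<longrightarrow> Q (w + rvec l) = Q w + rvec l)"

definition lat_coords :: "int^'d^'d \<Rightarrow> real^'d \<Rightarrow> int^'d" where
  "lat_coords M v = (THE n. rvec (M *v n) = v)"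

definition alg_v :: "(real^'d \<Rightarrow> real^'d) \<Rightarrow> (nat \<Rightarrow> int^'d) \<Rightarrow> nat \<Rightarrow> real^'d" where
  "alg_v Q rt i = Q (rvec (rt i - rt 1))"

definition alg_chi :: "(real^'d \<Rightarrow> real^'d) \<Rightarrow> int^'d^'d \<Rightarrow> (nat \<Rightarrow> int^'d^'d) \<Rightarrow> nat
     \<Rightarrow> int^'d^'d \<Rightarrow> (nat \<Rightarrow> int^'d) \<Rightarrow> int^'d" where
  "alg_chi Q M G L U1 rt = (THE chi. chi \<in> NN (mprod G 1 L ** U1) \<and> congr_mod chi 0 (G 1) \<and>
      (\<forall>i\<in>{2..L}. congr_mod chi (remd (lat_coords M (alg_v Q rt i)) (G i)) (G i)))"

definition alg1 :: "(real^'d \<Rightarrow> real^'d) \<Rightarrow> int^'d^'d \<Rightarrow> (nat \<Rightarrow> int^'d^'d) \<Rightarrow> nat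
     \<Rightarrow> int^'d^'d \<Rightarrow> (nat \<Rightarrow> int^'d) \<Rightarrow> nat \<Rightarrow> real^'d" where
  "alg1 Q M G L U1 rt i =
     (if i = 1 then matrix_inv (rmat (G 1)) *v rvec (alg_chi Q M G L U1 rt)
      else matrix_inv (rmat (G i)) *v rvec (alg_chi Q M G L U1 rt - lat_coords M (alg_v Q rt i)))"

end

theory Submission
  imports Defs "HOL-Library.FuncSet" "HOL-Computational_Algebra.Primes" "HOL-Number_Theory.Cong"
begin


lemma rvec_add: "rvec (x + y) = rvec x + rvec y"
  by (simp add: rvec_def vec_eq_iff)
lemma rvec_diff: "rvec (x - y) = rvec x - rvec y"
  by (simp add: rvec_def vec_eq_iff)
lemma rvec_0[simp]: "rvec 0 = 0"
  by (simp add: rvec_def vec_eq_iff)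
lemma rvec_inj: "rvec x = rvec y \<Longrightarrow> x = y"
  by (simp add: rvec_def vec_eq_iff)
lemma rvec_eq_iff: "rvec x = rvec y \<longleftrightarrow> x = y"
  using rvec_inj by auto
lemma rvec_comp[simp]: "rvec x $ i = real_of_int (x $ i)"
  by (simp add: rvec_def)
lemma rmat_comp[simp]: "rmat A $ i $ j = real_of_int (A $ i $ j)"
  by (simp add: rmat_def)
lemma rmat_mv: "rmat A *v rvec x = rvec (A *v x)"
  by (simp add: vec_eq_iff matrix_vector_mult_def)
lemma rmat_mul: "rmat (A ** B) = rmat A ** rmat B"
  by (simp add: vec_eq_iff matrix_matrix_mult_def)
lemma rmat_inj: "rmat A = rmat B \<Longrightarrow> A = B"
  by (simp add: vec_eq_iff)
lemma rmat_mat: "rmat (mat c) = mat (real_of_int c)"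
  by (simp add: vec_eq_iff mat_def)
lemma det_rmat: "det (rmat A) = real_of_int (det A)"
  by (simp add: det_def of_int_sum of_int_prod)

lemma inv_rmat:
  fixes A :: "int^'n^'n"
  assumes "det A \<noteq> 0"
  shows "matrix_inv (rmat A) ** rmat A = mat 1" "rmat A ** matrix_inv (rmat A) = mat 1"
proof -
  have "invertible (rmat A)" using assms by (simp add: det_rmat invertible_det_nz)
  then have "rmat A ** matrix_inv (rmat A) = mat 1 \<and> matrix_inv (rmat A) ** rmat A = mat 1"
    unfolding invertible_def matrix_inv_def by (rule someI_ex)
  then show "matrix_inv (rmat A) ** rmat A = mat 1" "rmat A ** matrix_inv (rmat A) = mat 1" by auto
qed

lemma rmat_cancel:
  fixes A :: "int^'n^'n"
  assumes "det A \<noteq> 0" "rmat A *v x = rmat A *v y" shows "x = y"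
proof -
  have "matrix_inv (rmat A) *v (rmat A *v x) = matrix_inv (rmat A) *v (rmat A *v y)" using assms by simp
  then show ?thesis using inv_rmat[OF assms(1)] by (simp add: matrix_vector_mul_assoc)
qed

lemma int_cancel:
  fixes A :: "int^'n^'n"
  assumes "det A \<noteq> 0" "A *v x = A *v y" shows "x = y"
  using rmat_cancel[of A "rvec x" "rvec y"] assms by (simp add: rmat_mv rvec_inj)

lemma inv_apply:
  fixes A :: "int^'n^'n"
  assumes "det A \<noteq> 0" shows "matrix_inv (rmat A) *v rvec (A *v x) = rvec x"
  using inv_rmat[OF assms] by (simp add: rmat_mv[symmetric] matrix_vector_mul_assoc)

lemma inv_apply_real:
  fixes A :: "int^'n^'n"
  assumes "det A \<noteq> 0" shows "matrix_inv (rmat A) *v (rmat A *v x) = x"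
  using inv_rmat[OF assms] by (simp add: matrix_vector_mul_assoc)



definition adjI :: "int^'n^'n \<Rightarrow> int^'n^'n" where
  "adjI A = (\<chi> k i. det (\<chi> r s. if s = k then (if r = i then 1 else 0) else A$r$s))"

lemma sum_delta_mult: fixes f :: "'n::finite \<Rightarrow> 'a::semiring_1" shows "(\<Sum>j\<in>UNIV. f j * (if j = i then 1 else (0::'a::semiring_1))) = f i"
proof -
  have "(\<Sum>j\<in>UNIV. f j * (if j = i then 1 else (0::'a))) = (\<Sum>j\<in>UNIV. if j = i then f j else 0)"
    by (rule sum.cong) auto
  then show ?thesis by simp
qed

lemma mv_smult: "A *v (c *s x) = (c::'a::comm_ring_1) *s (A *v x)"
  by (simp add: vec_eq_iff matrix_vector_mult_def sum_distrib_left mult.left_commute)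

lemma adjI_rmat:
  fixes A :: "int^'n^'n"
  assumes "det A \<noteq> 0"
  shows "real_of_int (adjI A $ k $ i) = matrix_inv (rmat A) $ k $ i * det (rmat A)"
proof -
  let ?R = "rmat A" and ?Ri = "matrix_inv (rmat A)"
  let ?e = "axis i (1::real)"
  have e: "?R *v (?Ri *v ?e) = ?e"
    using inv_rmat(2)[OF assms] by (simp add: matrix_vector_mul_assoc)
  have "real_of_int (adjI A $ k $ i) = det (rmat (\<chi> r s. if s = k then (if r = i then 1 else 0) else A$r$s))"
    by (simp add: adjI_def det_rmat)
  also have "rmat (\<chi> r s. if s = k then (if r = i then 1 else 0) else A$r$s)
      = (\<chi> r s. if s = k then (?R *v (?Ri *v ?e))$r else ?R$r$s)"
    unfolding e by (simp add: vec_eq_iff axis_def)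
  also have "det \<dots> = (?Ri *v ?e) $ k * det ?R" by (rule cramer_lemma)
  also have "(?Ri *v ?e) $ k = ?Ri $ k $ i"
    by (simp add: matrix_vector_mult_def axis_def sum_delta_mult)
  finally show ?thesis .
qed

lemma adjI_right:
  fixes A :: "int^'n^'n"
  assumes "det A \<noteq> 0"
  shows "A ** adjI A = mat (det A)"
proof -
  have "rmat (A ** adjI A) = rmat (mat (det A))"
  proof -
    have "rmat (A ** adjI A) $ a $ b = rmat (mat (det A)) $ a $ b" for a b
    proof -
      have "rmat (A ** adjI A) $ a $ b = (\<Sum>k\<in>UNIV. rmat A $ a $ k * rmat (adjI A) $ k $ b)"
        by (simp add: rmat_mul matrix_matrix_mult_def)
      also have "\<dots> = (\<Sum>k\<in>UNIV. rmat A $ a $ k * matrix_inv (rmat A) $ k $ b) * det (rmat A)"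
        by (simp add: adjI_rmat[OF assms] sum_distrib_right mult.assoc)
      also have "\<dots> = (rmat A ** matrix_inv (rmat A)) $ a $ b * det (rmat A)"
        by (simp add: matrix_matrix_mult_def)
      also have "\<dots> = rmat (mat (det A)) $ a $ b"
        using inv_rmat(2)[OF assms] by (simp add: mat_def det_rmat)
      finally show ?thesis .
    qed
    then show ?thesis by (simp add: vec_eq_iff)
  qed
  then show ?thesis by (rule rmat_inj)
qed

lemma mat_mv: "mat (c::int) *v x = c *s x"
  by (simp add: vec_eq_iff matrix_vector_mult_def mat_def if_distrib if_distribR sum.delta cong: if_cong)

lemma adjI_solve:
  fixes A :: "int^'n^'n"
  assumes "det A \<noteq> 0"
  shows "A *v (adjI A *v b) = det A *s b"
  by (simp add: matrix_vector_mul_assoc adjI_right[OF assms] mat_mv)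

lemma unimod_solve:
  fixes A :: "int^'n^'n"
  assumes "unimodular A"
  shows "\<exists>y. A *v y = b"
proof -
  have d: "det A \<noteq> 0" using assms by (auto simp: unimodular_def)
  have "A *v (det A *s (adjI A *v b)) = det A *s (det A *s b)"
    by (simp add: adjI_solve[OF d] mv_smult)
  also have "\<dots> = b" using assms by (auto simp: unimodular_def vec_eq_iff)
  finally show ?thesis by blast
qed



definition mc :: "int \<Rightarrow> int^'n^'m \<Rightarrow> int^'n^'m \<Rightarrow> bool" where
  "mc p X Y \<longleftrightarrow> (\<forall>i j. X$i$j mod p = Y$i$j mod p)"
definition vc :: "int \<Rightarrow> int^'n \<Rightarrow> int^'n \<Rightarrow> bool" where
  "vc p x y \<longleftrightarrow> (\<forall>i. x$i mod p = y$i mod p)"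

lemma mc_refl[simp]: "mc p X X" by (simp add: mc_def)
lemma mc_sym: "mc p X Y \<Longrightarrow> mc p Y X" by (simp add: mc_def)
lemma mc_trans: "mc p X Y \<Longrightarrow> mc p Y Z \<Longrightarrow> mc p X Z" by (simp add: mc_def)
lemma vc_refl[simp]: "vc p x x" by (simp add: vc_def)
lemma vc_sym: "vc p x y \<Longrightarrow> vc p y x" by (simp add: vc_def)
lemma vc_trans: "vc p x y \<Longrightarrow> vc p y z \<Longrightarrow> vc p x z" by (simp add: vc_def)

lemma sum_mod_cong:
  assumes "\<And>k. f k mod p = g k mod (p::int)"
  shows "sum f S mod p = sum g S mod p"
proof -
  have "sum f S mod p = (\<Sum>k\<in>S. f k mod p) mod p" by (simp add: mod_sum_eq)
  also have "\<dots> = (\<Sum>k\<in>S. g k mod p) mod p" using assms by simp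
  also have "\<dots> = sum g S mod p" by (simp add: mod_sum_eq)
  finally show ?thesis .
qed

lemma mc_mul: "mc p X X' \<Longrightarrow> mc p Y Y' \<Longrightarrow> mc p (X ** Y) (X' ** Y')"
  unfolding mc_def matrix_matrix_mult_def
  by (auto intro!: sum_mod_cong mod_mult_cong)

lemma mc_add: "mc p X X' \<Longrightarrow> mc p Y Y' \<Longrightarrow> mc p (X + Y) (X' + Y')"
  unfolding mc_def by (auto intro!: mod_add_cong)

lemma mc_diff: "mc p X X' \<Longrightarrow> mc p Y Y' \<Longrightarrow> mc p (X - Y) (X' - Y')"
  unfolding mc_def by (auto intro!: mod_diff_cong)

lemma vc_mv: "mc p X X' \<Longrightarrow> vc p x x' \<Longrightarrow> vc p (X *v x) (X' *v x')"
  unfolding mc_def vc_def matrix_vector_mult_def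
  by (auto intro!: sum_mod_cong mod_mult_cong)

lemma vc_vm: "vc p x x' \<Longrightarrow> mc p X X' \<Longrightarrow> vc p (x v* X) (x' v* X')"
  unfolding mc_def vc_def vector_matrix_mult_def
  by (auto intro!: sum_mod_cong mod_mult_cong)

lemma vc_diff: "vc p x x' \<Longrightarrow> vc p y y' \<Longrightarrow> vc p (x - y) (x' - y')"
  unfolding vc_def by (auto intro!: mod_diff_cong)

lemma vc_add: "vc p x x' \<Longrightarrow> vc p y y' \<Longrightarrow> vc p (x + y) (x' + y')"
  unfolding vc_def by (auto intro!: mod_add_cong)

primrec mpow :: "'a::semiring_1^'n^'n \<Rightarrow> nat \<Rightarrow> 'a^'n^'n" where
  "mpow A 0 = mat 1"
| "mpow A (Suc n) = A ** mpow A n"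

lemma mpow_add: "mpow A (m + n) = mpow A m ** mpow A n"
  by (induct m) (simp_all add: matrix_mul_assoc)

lemma mpow_comm:
  assumes "A ** B = B ** A" shows "mpow A n ** B = B ** mpow A n"
proof (induct n)
  case 0 then show ?case by simp
next
  case (Suc n)
  have "mpow A (Suc n) ** B = A ** (mpow A n ** B)" by (simp add: matrix_mul_assoc)
  also have "\<dots> = A ** B ** mpow A n" using Suc by (simp add: matrix_mul_assoc)
  also have "\<dots> = B ** mpow A (Suc n)" using assms by (simp add: matrix_mul_assoc)
  finally show ?case .
qed

lemma mpow_comm2:
  assumes "A ** B = B ** A" shows "mpow A m ** mpow B n = mpow B n ** mpow A m"
  using mpow_comm[of B "mpow A m" n] mpow_comm[OF assms, of m]
  by (metis mpow_comm)

lemma mpow_Suc_right: "mpow A (Suc n) = mpow A n ** A"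
  using mpow_add[of A n 1] by simp

lemma finite_residue_funs:
  "finite {g :: 'n::finite \<Rightarrow> 'n \<Rightarrow> int. \<forall>i j. g i j \<in> {0..<p}}"
proof -
  have "{g :: 'n \<Rightarrow> 'n \<Rightarrow> int. \<forall>i j. g i j \<in> {0..<p}} = Pi\<^sub>E UNIV (\<lambda>_. Pi\<^sub>E UNIV (\<lambda>_. {0..<p}))"
    by (auto simp: PiE_UNIV_domain Pi_def)
  moreover have "finite (Pi\<^sub>E (UNIV::'n set) (\<lambda>_. Pi\<^sub>E (UNIV::'n set) (\<lambda>_. {0..<p})))"
    by (intro finite_PiE) auto
  ultimately show ?thesis by simp
qed

lemma idem_power:
  fixes A :: "int^'n^'n"
  assumes p: "p > 0"
  shows "\<exists>k\<ge>1. mc p (mpow A (k + k)) (mpow A k)"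
proof -
  define f where "f n = (\<lambda>i j. mpow A n $ i $ j mod p)" for n
  have "range f \<subseteq> {g. \<forall>i j. g i j \<in> {0..<p}}" using p by (auto simp: f_def)
  then have "finite (range f)" using finite_residue_funs finite_subset by blast
  then have "\<not> inj f" using infinite_UNIV_nat finite_imageD by blast
  then obtain i j where ij: "i \<noteq> j" "f i = f j" unfolding inj_def by blast
  obtain a b where ab: "a < b" "f a = f b"
    using ij by (metis linorder_neqE_nat)
  have mab: "mc p (mpow A a) (mpow A b)"
    using ab(2) unfolding f_def mc_def by (metis)
  define d where "d = b - a"
  have d: "d \<ge> 1" using ab d_def by auto
  have step: "mc p (mpow A (x + d)) (mpow A x)" if "x \<ge> a" for x
  proof -
    have "mpow A (x + d) = mpow A (x - a) ** mpow A b"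
      using that ab by (simp add: mpow_add[symmetric] d_def)
    moreover have "mpow A x = mpow A (x - a) ** mpow A a"
      using that by (simp add: mpow_add[symmetric])
    ultimately show ?thesis using mc_mul[OF mc_refl mc_sym[OF mab]] by simp
  qed
  have multi: "mc p (mpow A (x + m * d)) (mpow A x)" if "x \<ge> a" for x m
  proof (induct m)
    case 0 then show ?case by simp
  next
    case (Suc m)
    have s1: "mc p (mpow A ((x + m * d) + d)) (mpow A (x + m * d))" using step that by simp
    have eq: "x + Suc m * d = (x + m * d) + d" by simp
    show ?case unfolding eq by (rule mc_trans[OF s1 Suc])
  qed
  define k where "k = (a + 1) * d"
  have k1: "k \<ge> 1" using d by (simp add: k_def)
  have "(a + 1) * 1 \<le> (a + 1) * d" using d by (rule mult_le_mono2)
  then have ka: "k \<ge> a" by (simp add: k_def)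
  have "mc p (mpow A (k + (a + 1) * d)) (mpow A k)" using multi[OF ka] .
  then show ?thesis using k1 by (auto simp: k_def)
qed



lemma vm_zero[simp]: "(0::int^'n) v* X = 0"
  by (simp add: vector_matrix_mult_def vec_eq_iff)
lemma mv_zero[simp]: "X *v (0::int^'n) = 0"
  by (simp add: matrix_vector_mult_def vec_eq_iff)

lemma vc0_vm: "vc p x 0 \<Longrightarrow> vc p (x v* X) 0"
  using vc_vm[OF _ mc_refl, of p x 0 X] by simp
lemma vc0_mv: "vc p x 0 \<Longrightarrow> vc p (X *v x) 0"
  using vc_mv[OF mc_refl, of p x 0 X] by simp

lemma mm_diff_left: "(X::int^'n^'n) ** (Y - Z) = X ** Y - X ** Z"
  by (simp add: matrix_matrix_mult_def vec_eq_iff sum_subtractf algebra_simps)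
lemma mm_diff_right: "((Y::int^'n^'n) - Z) ** X = Y ** X - Z ** X"
  by (simp add: matrix_matrix_mult_def vec_eq_iff sum_subtractf algebra_simps)
lemma mv_diff_right: "((Y::int^'n^'n) - Z) *v x = Y *v x - Z *v x"
  by (simp add: matrix_vector_mult_def vec_eq_iff sum_subtractf algebra_simps)

lemma row_mm: "(F ** X) $ r = F $ r v* X"
  by (simp add: matrix_matrix_mult_def vector_matrix_mult_def vec_eq_iff mult.commute)

lemma mc_row: "mc p X Y \<Longrightarrow> vc p (X $ r) (Y $ r)"
  by (simp add: mc_def vc_def)

lemma descend:
  fixes X :: "int^'n^'n"
  assumes "\<not> vc p c 0" "vc p (c v* mpow X k) 0"
  shows "\<exists>i. \<not> vc p (c v* mpow X i) 0 \<and> vc p ((c v* mpow X i) v* X) 0"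
  using assms
proof (induct k arbitrary: c)
  case 0 then show ?case by simp
next
  case (Suc k)
  show ?case
  proof (cases "vc p (c v* X) 0")
    case True
    then show ?thesis using Suc(2) by (intro exI[of _ 0]) simp
  next
    case False
    have "vc p ((c v* X) v* mpow X k) 0"
      using Suc(3) by (simp add: vector_matrix_mul_assoc)
    from Suc(1)[OF False this] obtain i where
      "\<not> vc p ((c v* X) v* mpow X i) 0 \<and> vc p (((c v* X) v* mpow X i) v* X) 0" by blast
    then show ?thesis by (intro exI[of _ "Suc i"]) (simp add: vector_matrix_mul_assoc)
  qed
qed

lemma idem_kill:
  fixes E :: "int^'n^'n"
  assumes "mc p (E ** E) E"
  shows "mc p (E ** (mat 1 - E)) 0" "mc p ((mat 1 - E) ** E) 0"
proof -
  have "mc p (E - E ** E) (E - E)" by (rule mc_diff[OF mc_refl assms])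
  then show "mc p (E ** (mat 1 - E)) 0" "mc p ((mat 1 - E) ** E) 0"
    by (simp_all add: mm_diff_left mm_diff_right)
qed

lemma common_left_null:
  fixes A B :: "int^'n^'n"
  assumes p: "p > 0" and comm: "A ** B = B ** A"
    and u: "\<not> vc p u 0" and Au: "vc p (A *v u) 0" and Bu: "vc p (B *v u) 0"
  shows "\<exists>c. \<not> vc p c 0 \<and> vc p (c v* A) 0 \<and> vc p (c v* B) 0"
proof -
  obtain k where k: "k \<ge> 1" "mc p (mpow A (k + k)) (mpow A k)" using idem_power[OF p] by blast
  obtain l where l: "l \<ge> 1" "mc p (mpow B (l + l)) (mpow B l)" using idem_power[OF p] by blast
  define E where "E = mpow A k"
  define E' where "E' = mpow B l"
  have EE: "mc p (E ** E) E" using k(2) by (simp add: E_def mpow_add)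
  have EE': "mc p (E' ** E') E'" using l(2) by (simp add: E'_def mpow_add)
  have cEE: "E ** E' = E' ** E" unfolding E_def E'_def by (rule mpow_comm2[OF comm])
  define F where "F = (mat 1 - E) ** (mat 1 - E')"
  have Eu: "vc p (E *v u) 0"
  proof -
    have "E = mpow A (k - 1) ** A" using k(1) mpow_Suc_right[of A "k - 1"] by (simp add: E_def)
    then show ?thesis using vc0_mv[OF Au, of "mpow A (k - 1)"] by (simp add: matrix_vector_mul_assoc)
  qed
  have E'u: "vc p (E' *v u) 0"
  proof -
    have "E' = mpow B (l - 1) ** B" using l(1) mpow_Suc_right[of B "l - 1"] by (simp add: E'_def)
    then show ?thesis using vc0_mv[OF Bu, of "mpow B (l - 1)"] by (simp add: matrix_vector_mul_assoc)
  qed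
  have s1: "vc p ((mat 1 - E') *v u) u"
    using vc_diff[OF vc_refl E'u, of u] by (simp add: mv_diff_right)
  have s2: "vc p ((mat 1 - E) *v ((mat 1 - E') *v u)) u"
  proof -
    have "vc p ((mat 1 - E) *v ((mat 1 - E') *v u)) ((mat 1 - E) *v u)" by (rule vc_mv[OF mc_refl s1])
    moreover have "vc p ((mat 1 - E) *v u) u"
      using vc_diff[OF vc_refl Eu, of u] by (simp add: mv_diff_right)
    ultimately show ?thesis by (rule vc_trans)
  qed
  have Fu: "vc p (F *v u) u" using s2 by (simp add: F_def matrix_vector_mul_assoc)
  have "\<not> mc p F 0"
  proof
    assume "mc p F 0"
    then have "vc p (F *v u) (0 *v u)" by (rule vc_mv[OF _ vc_refl])
    then have "vc p u 0" using Fu vc_trans vc_sym by (metis matrix_vector_mult_0)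
    then show False using u by simp
  qed
  then obtain r where r: "\<not> vc p (F $ r) 0" unfolding mc_def vc_def by auto
  define c0 where "c0 = F $ r"
  have FE: "mc p (F ** E) 0"
  proof -
    have "F ** E = ((mat 1 - E) ** E) ** (mat 1 - E')"
      unfolding F_def using cEE
      by (simp add: matrix_mul_assoc[symmetric] mm_diff_left mm_diff_right) (metis matrix_mul_assoc)
    then show ?thesis using mc_mul[OF idem_kill(2)[OF EE] mc_refl, of "mat 1 - E'"] by simp
  qed
  have FE': "mc p (F ** E') 0"
  proof -
    have "F ** E' = (mat 1 - E) ** ((mat 1 - E') ** E')"
      unfolding F_def by (simp add: matrix_mul_assoc)
    then show ?thesis using mc_mul[OF mc_refl idem_kill(2)[OF EE'], of "mat 1 - E"] by simp
  qed
  have c0E: "vc p (c0 v* mpow A k) 0" using mc_row[OF FE, of r] by (simp add: c0_def row_mm E_def)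
  have c0E': "vc p (c0 v* E') 0" using mc_row[OF FE', of r] by (simp add: c0_def row_mm)
  obtain i where i: "\<not> vc p (c0 v* mpow A i) 0" "vc p ((c0 v* mpow A i) v* A) 0"
    using descend[OF r[folded c0_def] c0E] by blast
  define c1 where "c1 = c0 v* mpow A i"
  have c1B: "vc p (c1 v* mpow B l) 0"
  proof -
    have "c1 v* mpow B l = (c0 v* E') v* mpow A i"
      using mpow_comm2[OF comm, of i l]
      by (simp add: c1_def E'_def vector_matrix_mul_assoc)
    then show ?thesis using vc0_vm[OF c0E'] by simp
  qed
  obtain j where j: "\<not> vc p (c1 v* mpow B j) 0" "vc p ((c1 v* mpow B j) v* B) 0"
    using descend[OF i(1)[folded c1_def] c1B] by blast
  have "vc p ((c1 v* mpow B j) v* A) 0"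
  proof -
    have "mpow B j ** A = A ** mpow B j" using mpow_comm[of B A j] comm by simp
    then have "(c1 v* mpow B j) v* A = (c1 v* A) v* mpow B j"
      by (simp add: vector_matrix_mul_assoc)
    then show ?thesis using vc0_vm[OF i(2)[folded c1_def]] by simp
  qed
  then show ?thesis using j by blast
qed



lemma split_sum: "(\<Sum>l\<in>UNIV. f l) = f k + (\<Sum>l\<in>UNIV-{k}. f l)"
  for f :: "'n::finite \<Rightarrow> int"
  by (simp add: sum.remove)

definition Dvm :: "int \<Rightarrow> int^'n \<Rightarrow> 'n \<Rightarrow> int^'n^'n" where
  "Dvm p c k = (\<chi> i j. if i = k then (if j = k then p else - c$j) else (if i = j then 1 else 0))"

definition Xm :: "int \<Rightarrow> int^'n \<Rightarrow> 'n \<Rightarrow> int^'n^'n \<Rightarrow> int^'n^'n" where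
  "Xm p c k A = (\<chi> i j. if i = k then (c v* A)$j div p else A$i$j)"

lemma Dvm_factor:
  fixes A :: "int^'n^'n"
  assumes ck: "c$k = 1" and cA: "vc p (c v* A) 0"
  shows "Dvm p c k ** Xm p c k A = A"
proof -
  have "(Dvm p c k ** Xm p c k A) $ i $ j = A $ i $ j" for i j
  proof (cases "i = k")
    case True
    have dv: "p * ((c v* A)$j div p) = (c v* A)$j"
      using cA mult_div_mod_eq[of p "(c v* A)$j"] by (simp add: vc_def)
    have "(Dvm p c k ** Xm p c k A) $ i $ j
        = p * ((c v* A)$j div p) + (\<Sum>l\<in>UNIV-{k}. - c$l * A$l$j)"
      unfolding matrix_matrix_mult_def using True
      by (simp add: split_sum[of _ k] Dvm_def Xm_def)
    also have "\<dots> = (c v* A)$j - (\<Sum>l\<in>UNIV-{k}. c$l * A$l$j)"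
      by (simp add: dv sum_negf)
    also have "(c v* A)$j = A$k$j + (\<Sum>l\<in>UNIV-{k}. c$l * A$l$j)"
      by (simp add: vector_matrix_mult_def split_sum[of _ k] ck)
    finally show ?thesis using True by simp
  next
    case False
    have "(Dvm p c k ** Xm p c k A) $ i $ j = (\<Sum>l\<in>UNIV. (if i = l then 1 else 0) * Xm p c k A $ l $ j)"
      unfolding matrix_matrix_mult_def using False by (simp add: Dvm_def)
    also have "\<dots> = Xm p c k A $ i $ j"
      by (simp add: if_distrib if_distribR cong: if_cong)
    finally show ?thesis using False by (simp add: Xm_def)
  qed
  then show ?thesis by (simp add: vec_eq_iff)
qed

lemma Dvm_not_unimod:
  fixes c :: "int^'n"
  assumes p: "p > 1"
  shows "\<not> unimodular (Dvm p c k)"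
proof
  assume "unimodular (Dvm p c k)"
  then obtain y where y: "Dvm p c k *v y = axis k 1" using unimod_solve by blast
  have yi: "y$i = 0" if "i \<noteq> k" for i
  proof -
    have "(Dvm p c k *v y)$i = (\<Sum>l\<in>UNIV. (if i = l then 1 else 0) * y$l)"
      unfolding matrix_vector_mult_def using that by (simp add: Dvm_def)
    also have "\<dots> = y$i" by (simp add: if_distrib if_distribR cong: if_cong)
    finally show ?thesis using y that by (simp add: axis_def)
  qed
  have "(Dvm p c k *v y)$k = p * y$k + (\<Sum>l\<in>UNIV-{k}. - c$l * y$l)"
    unfolding matrix_vector_mult_def by (simp add: split_sum[of _ k] Dvm_def)
  also have "(\<Sum>l\<in>UNIV-{k}. - c$l * y$l) = 0" by (rule sum.neutral) (simp add: yi)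
  finally have "p * y$k = 1" using y by (simp add: axis_def)
  then have "p dvd 1" by (metis dvd_triv_left)
  then show False using p by simp
qed

lemma not_coprime_of_null:
  fixes A B :: "int^'n^'n" and p :: nat
  assumes p: "prime p" and c: "\<not> vc (int p) c 0"
    and cA: "vc (int p) (c v* A) 0" and cB: "vc (int p) (c v* B) 0"
  shows "\<not> coprime_mat A B"
proof -
  obtain k where k: "c$k mod int p \<noteq> 0" using c by (auto simp: vc_def)
  have "coprime (int p) (c$k)"
    using k p by (intro prime_imp_coprime) (auto simp: dvd_eq_mod_eq_0)
  then have "coprime (c$k) (int p)" by (simp add: coprime_commute)
  then obtain s where s: "[c$k * s = 1] (mod int p)" using cong_solve_coprime_int by blast
  define c' where "c' = (\<chi> j. if j = k then 1 else s * c$j)"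
  have cc: "vc (int p) c' (s *s c)"
    using s by (auto simp: vc_def c'_def cong_def mult.commute)
  have "c' v* X = c' v* X" for X :: "int^'n^'n" by simp
  have cX: "vc (int p) (c' v* X) 0" if "vc (int p) (c v* X) 0" for X :: "int^'n^'n"
  proof -
    have "vc (int p) (c' v* X) ((s *s c) v* X)" by (rule vc_vm[OF cc mc_refl])
    moreover have "(s *s c) v* X = s *s (c v* X)"
      by (simp add: vector_matrix_mult_def vec_eq_iff sum_distrib_left mult.assoc)
    moreover have "vc (int p) (s *s (c v* X)) 0"
      using that by (auto simp: vc_def mod_mult_right_eq[symmetric, of s])
    ultimately show ?thesis using vc_trans by metis
  qed
  have ck: "c'$k = 1" by (simp add: c'_def)
  have p1: "int p > 1" using p prime_gt_1_nat by auto
  show ?thesis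
    unfolding coprime_mat_def
    using Dvm_factor[OF ck cX[OF cA]] Dvm_factor[OF ck cX[OF cB]] Dvm_not_unimod[OF p1]
    by metis
qed



definition lcop :: "int^'n^'n \<Rightarrow> int^'n^'n \<Rightarrow> bool" where
  "lcop A B \<longleftrightarrow> (\<forall>(p::nat) c. prime p \<longrightarrow> \<not> vc (int p) c 0 \<longrightarrow> vc (int p) (c v* A) 0
       \<longrightarrow> \<not> vc (int p) (c v* B) 0)"

lemma cop_lcop: "coprime_mat A B \<Longrightarrow> lcop A B"
  unfolding lcop_def using not_coprime_of_null by blast

lemma lcop_one: "lcop C (mat 1)"
  unfolding lcop_def by simp

lemma lcop_mult:
  assumes "lcop C A" "lcop C B" "C ** A = A ** C"
  shows "lcop C (A ** B)"
  unfolding lcop_def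
proof (intro allI impI)
  fix p :: nat and c
  assume p: "prime p" and c: "\<not> vc (int p) c 0" and cC: "vc (int p) (c v* C) 0"
  show "\<not> vc (int p) (c v* (A ** B)) 0"
  proof
    assume cAB: "vc (int p) (c v* (A ** B)) 0"
    show False
    proof (cases "vc (int p) (c v* A) 0")
      case True
      then show False using assms(1) p c cC unfolding lcop_def by blast
    next
      case False
      have "vc (int p) ((c v* A) v* B) 0" using cAB by (simp add: vector_matrix_mul_assoc)
      moreover have "vc (int p) ((c v* A) v* C) 0"
        using vc0_vm[OF cC, of A] assms(3) by (simp add: vector_matrix_mul_assoc)
      ultimately show False using assms(2) p False unfolding lcop_def by blast
    qed
  qed
qed

lemma smult_cancel: "(k::int) \<noteq> 0 \<Longrightarrow> k *s x = k *s y \<Longrightarrow> x = y"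
  by (simp add: vec_eq_iff)

lemma lat_inter:
  fixes A B :: "int^'n^'n"
  assumes dB: "det B \<noteq> 0" and comm: "A ** B = B ** A" and eq: "A *v a = B *v b"
    and lc: "lcop A B"
  shows "\<exists>y. a = B *v y"
proof (rule ccontr)
  assume na: "\<not> (\<exists>y. a = B *v y)"
  define S where "S = {q::nat. q > 0 \<and> (\<exists>w. B *v w = int q *s a)}"
  have "nat \<bar>det B\<bar> \<in> S"
  proof -
    have "B *v (sgn (det B) *s (adjI B *v a)) = sgn (det B) *s (det B *s a)"
      by (simp add: mv_smult adjI_solve[OF dB])
    also have "\<dots> = int (nat \<bar>det B\<bar>) *s a"
    proof -
      have "int (nat \<bar>det B\<bar>) = \<bar>det B\<bar>" by simp
      also have "\<dots> = sgn (det B) * det B" by (simp add: abs_sgn mult.commute)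
      finally have "int (nat \<bar>det B\<bar>) = sgn (det B) * det B" .
      then show ?thesis by (simp add: vec_eq_iff mult.assoc)
    qed
    finally show ?thesis using dB unfolding S_def by auto
  qed
  then have S: "S \<noteq> {}" by blast
  define q where "q = (LEAST q. q \<in> S)"
  have qS: "q \<in> S" unfolding q_def using S by (metis LeastI ex_in_conv)
  then obtain w where w: "B *v w = int q *s a" and q0: "q > 0" unfolding S_def by blast
  have "q \<noteq> 1"
  proof
    assume "q = 1"
    then have "B *v w = a" using w by (simp add: vec_eq_iff)
    then show False using na by metis
  qed
  then obtain p :: nat where p: "prime p" "p dvd q" using prime_factor_nat by blast
  then obtain q' where q': "q = p * q'" by blast
  have p1: "p > 1" using p prime_gt_1_nat by auto
  have q'0: "q' > 0" using q0 q' by auto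
  have "q' < q" using q' q'0 p1 by simp
  then have q'S: "q' \<notin> S" unfolding q_def using not_less_Least by blast
  have wnz: "\<not> vc (int p) w 0"
  proof
    assume "vc (int p) w 0"
    then have wd: "\<forall>i. w$i mod int p = 0" by (simp add: vc_def)
    define w' where "w' = (\<chi> i. w$i div int p)"
    have "w = int p *s w'"
    proof -
      have "w$i = int p * (w$i div int p)" for i using wd mult_div_mod_eq[of "int p" "w$i"] by simp
      then show ?thesis by (simp add: vec_eq_iff w'_def)
    qed
    then have "int p *s (B *v w') = B *v w" by (simp add: mv_smult)
    also have "\<dots> = int p *s (int q' *s a)" using w q' by (simp add: vec_eq_iff mult.assoc)
    finally have e: "int p *s (B *v w') = int p *s (int q' *s a)" .
    have "int p \<noteq> 0" using p1 by simp
    from smult_cancel[OF this e] have "B *v w' = int q' *s a" .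
    then show False using q'S q'0 unfolding S_def by blast
  qed
  have Bw: "vc (int p) (B *v w) 0"
    using w q' by (simp add: vc_def mult.assoc)
  have "B *v (A *v w) = B *v (int q *s b)"
  proof -
    have "B *v (A *v w) = A *v (B *v w)" by (simp add: matrix_vector_mul_assoc comm)
    also have "\<dots> = int q *s (B *v b)" by (simp add: w mv_smult eq)
    finally show ?thesis by (simp add: mv_smult)
  qed
  then have "A *v w = int q *s b" by (rule int_cancel[OF dB])
  then have Aw: "vc (int p) (A *v w) 0"
    using q' by (simp add: vc_def mult.assoc)
  obtain c where "\<not> vc (int p) c 0" "vc (int p) (c v* A) 0" "vc (int p) (c v* B) 0"
    using common_left_null[of "int p" A B w] p1 comm wnz Aw Bw by auto
  then show False using lc p unfolding lcop_def by blast
qed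

lemma lat_inter2:
  fixes A B :: "int^'n^'n"
  assumes "det B \<noteq> 0" "A ** B = B ** A" "lcop A B" "x \<in> LAT A" "x \<in> LAT B"
  shows "x \<in> LAT (A ** B)"
proof -
  obtain a where a: "x = A *v a" using assms(4) by (auto simp: LAT_def)
  obtain b where b: "x = B *v b" using assms(5) by (auto simp: LAT_def)
  obtain y where "a = B *v y" using lat_inter[OF assms(1,2) _ assms(3), of a b] a b by auto
  then have "x = (A ** B) *v y" using a by (simp add: matrix_vector_mul_assoc)
  then show ?thesis by (auto simp: LAT_def)
qed



lemma mprod_cons: "a \<le> b \<Longrightarrow> mprod G a b = G a ** mprod G (Suc a) b"
proof -
  assume "a \<le> b"
  then have "[a..<Suc b] = a # [Suc a..<Suc b]" by (intro upt_conv_Cons) simp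
  then show ?thesis by (simp only: mprod_def foldr_Cons o_apply)
qed

lemma mprod_nil: "b < a \<Longrightarrow> mprod G a b = mat 1"
  unfolding mprod_def by simp

lemma mprod_induct:
  assumes base: "\<And>a. b < a \<Longrightarrow> P a"
    and step: "\<And>a. a \<le> b \<Longrightarrow> P (Suc a) \<Longrightarrow> P a"
  shows "P a"
proof (induct "Suc b - a" arbitrary: a)
  case 0 then show ?case using base by simp
next
  case (Suc n)
  then have "a \<le> b" by simp
  moreover have "P (Suc a)" using Suc by simp
  ultimately show ?case by (rule step)
qed

lemma mprod_det:
  fixes G :: "nat \<Rightarrow> int^'n^'n"
  shows "(\<forall>i\<in>{a..b}. det (G i) \<noteq> 0) \<Longrightarrow> det (mprod G a b) \<noteq> 0"
proof (induct a rule: mprod_induct[of b])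
  case (1 a) then show ?case by (simp add: mprod_nil)
next
  case (2 a) then show ?case by (simp add: mprod_cons det_mul)
qed

lemma mprod_comm:
  fixes G :: "nat \<Rightarrow> int^'n^'n"
  shows "(\<forall>i\<in>{a..b}. C ** G i = G i ** C) \<Longrightarrow> C ** mprod G a b = mprod G a b ** C"
proof (induct a rule: mprod_induct[of b])
  case (1 a) then show ?case by (simp add: mprod_nil)
next
  case (2 a)
  then have h1: "C ** G a = G a ** C" and h2: "C ** mprod G (Suc a) b = mprod G (Suc a) b ** C" by auto
  show ?case using 2(1) by (simp add: mprod_cons matrix_mul_assoc h1) (simp add: matrix_mul_assoc[symmetric] h2)
qed

lemma mprod_lcop:
  fixes G :: "nat \<Rightarrow> int^'n^'n"
  shows "(\<forall>i\<in>{a..b}. lcop C (G i) \<and> C ** G i = G i ** C) \<Longrightarrow> lcop C (mprod G a b)"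
proof (induct a rule: mprod_induct[of b])
  case (1 a) then show ?case by (simp add: mprod_nil lcop_one)
next
  case (2 a)
  then show ?case by (simp add: mprod_cons lcop_mult)
qed

lemma mprod_crt:
  fixes G :: "nat \<Rightarrow> int^'n^'n"
  shows "(\<forall>i\<in>{a..b}. det (G i) \<noteq> 0) \<Longrightarrow>
    (\<forall>i\<in>{a..b}. \<forall>j\<in>{a..b}. i \<noteq> j \<longrightarrow> G i ** G j = G j ** G i \<and> lcop (G i) (G j)) \<Longrightarrow>
    (\<forall>i\<in>{a..b}. x \<in> LAT (G i)) \<Longrightarrow> x \<in> LAT (mprod G a b)"
proof (induct a rule: mprod_induct[of b])
  case (1 a)
  have "x = mat 1 *v x" by simp
  then show ?case using 1 by (simp add: mprod_nil LAT_def)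
next
  case (2 a)
  let ?P = "mprod G (Suc a) b"
  have xP: "x \<in> LAT ?P" using 2 by auto
  have xa: "x \<in> LAT (G a)" using 2 by auto
  have dP: "det ?P \<noteq> 0" using 2 by (intro mprod_det) auto
  have cP: "G a ** ?P = ?P ** G a" using 2 by (intro mprod_comm) auto
  have lP: "lcop (G a) ?P" using 2 by (intro mprod_lcop) auto
  show ?case using lat_inter2[OF dP cP lP xa xP] 2(1) by (simp add: mprod_cons)
qed



lemma LAT_mem: "A *v n \<in> LAT A" by (auto simp: LAT_def)
lemma LAT_diff: "x \<in> LAT A \<Longrightarrow> y \<in> LAT A \<Longrightarrow> x - y \<in> LAT A"
  by (auto simp: LAT_def matrix_vector_mult_diff_distrib[symmetric])

lemma NN_unique:
  fixes A :: "int^'n^'n"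
  assumes d: "det A \<noteq> 0" and r: "r \<in> NN A" and r': "r' \<in> NN A" and l: "r - r' \<in> LAT A"
  shows "r = r'"
proof -
  obtain f where f: "\<forall>j. 0 \<le> f$j \<and> f$j < 1" "rvec r = rmat A *v f" using r by (auto simp: NN_def)
  obtain f' where f': "\<forall>j. 0 \<le> f'$j \<and> f'$j < 1" "rvec r' = rmat A *v f'" using r' by (auto simp: NN_def)
  obtain k where k: "r - r' = A *v k" using l by (auto simp: LAT_def)
  have "rmat A *v (f - f') = rmat A *v rvec k"
    by (simp add: matrix_vector_mult_diff_distrib f(2)[symmetric] f'(2)[symmetric] rmat_mv rvec_diff[symmetric] k)
  then have e: "f - f' = rvec k" by (rule rmat_cancel[OF d])
  have "k$j = 0" for j
  proof -
    have "real_of_int (k$j) = f$j - f'$j" using e by (simp add: vec_eq_iff)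
    then have "real_of_int (k$j) > -1" "real_of_int (k$j) < 1" using f(1) f'(1) by (smt (verit))+
    then have "k$j > -1" "k$j < 1" by simp_all
    then show ?thesis by linarith
  qed
  then have "k = 0" by (simp add: vec_eq_iff)
  then show ?thesis using k by simp
qed

lemma remd_props:
  fixes A :: "int^'n^'n"
  assumes d: "det A \<noteq> 0"
  shows "remd m A \<in> NN A \<and> m - remd m A \<in> LAT A"
proof -
  define x where "x = matrix_inv (rmat A) *v rvec m"
  define k where "k = (\<chi> j. \<lfloor>x$j\<rfloor>)"
  define r where "r = m - A *v k"
  have xm: "rmat A *v x = rvec m" using inv_rmat(2)[OF d] by (simp add: x_def matrix_vector_mul_assoc)
  have "rvec r = rmat A *v (x - rvec k)"
    by (simp add: r_def rvec_diff rmat_mv[symmetric] matrix_vector_mult_diff_distrib xm)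
  moreover have "\<forall>j. 0 \<le> (x - rvec k)$j \<and> (x - rvec k)$j < 1"
    using floor_correct by (simp add: k_def) (smt (verit) of_int_1 of_int_add floor_correct)
  ultimately have rN: "r \<in> NN A" unfolding NN_def by blast
  have rL: "m - r \<in> LAT A" by (simp add: r_def LAT_mem)
  have "\<exists>!r. r \<in> NN A \<and> m - r \<in> LAT A"
  proof (rule ex1I[of _ r])
    show "r \<in> NN A \<and> m - r \<in> LAT A" using rN rL by simp
  next
    fix r' assume "r' \<in> NN A \<and> m - r' \<in> LAT A"
    then show "r' = r" using NN_unique[OF d _ rN, of r'] LAT_diff[OF rL, of "m - r'"] by simp
  qed
  then show ?thesis unfolding remd_def by (rule theI')
qed

lemma lat_coords_eq:
  fixes M :: "int^'n^'n"
  assumes d: "det M \<noteq> 0"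
  shows "lat_coords M (rvec (M *v t)) = t"
  unfolding lat_coords_def
  using int_cancel[OF d] rvec_inj by (intro the_equality) auto

lemma norm_props:
  assumes "is_norm nrm"
  shows "nrm 0 = 0" "nrm (- x) = nrm x" "nrm x \<ge> 0" "nrm (x + y) \<le> nrm x + nrm y"
    "nrm (x - y) \<le> nrm x + nrm y"
proof -
  show n0: "nrm 0 = 0" using assms by (simp add: is_norm_def)
  show nn: "nrm (- x) = nrm x" for x
    using assms unfolding is_norm_def by (metis abs_minus_cancel abs_one mult_1 scaleR_minus1_left)
  show "nrm (x + y) \<le> nrm x + nrm y" using assms by (simp add: is_norm_def)
  show "nrm (x - y) \<le> nrm x + nrm y"
    using assms nn[of y] unfolding is_norm_def by (metis diff_conv_add_uminus)
  have "nrm (x + - x) \<le> nrm x + nrm (-x)" using assms by (simp only: is_norm_def)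
  then have "nrm 0 \<le> nrm x + nrm (-x)" by (simp only: right_minus)
  then show "nrm x \<ge> 0" using n0 nn[of x] by simp
qed

lemma Q_zero:
  assumes n: "is_norm nrm" and Q: "is_closest_map nrm M Q"
    and w: "nrm w < lat_min nrm M / 2"
  shows "Q w = 0"
proof (rule ccontr)
  assume ne: "Q w \<noteq> 0"
  obtain v where v: "v \<in> LAT M" "Q w = rvec v" using Q unfolding is_closest_map_def by blast
  have v0: "v \<noteq> 0" using ne v by auto
  have "nrm (Q w - w) \<le> nrm (rvec 0 - w)"
    using Q LAT_mem[of M 0] unfolding is_closest_map_def by (metis mv_zero)
  then have "nrm (Q w - w) \<le> nrm w" using norm_props(2)[OF n] by simp
  moreover have "nrm (Q w) \<le> nrm (Q w - w) + nrm w"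
    using norm_props(4)[OF n, of "Q w - w" w] by simp
  ultimately have "nrm (Q w) < lat_min nrm M" using w by simp
  moreover have "lat_min nrm M \<le> nrm (rvec v)"
    unfolding lat_min_def
  proof (rule cInf_lower)
    show "nrm (rvec v) \<in> {nrm (rvec v) |v. v \<in> LAT M \<and> v \<noteq> 0}" using v v0 by blast
    show "bdd_below {nrm (rvec v) |v. v \<in> LAT M \<and> v \<noteq> 0}"
      using norm_props(3)[OF n] by (intro bdd_belowI[of _ 0]) auto
  qed
  ultimately show False using v by simp
qed

lemma floor_vec:
  fixes A :: "int^'n^'n"
  assumes d: "det A \<noteq> 0" and r: "r \<in> NN A" and m: "m = A *v n + r"
  shows "(\<chi> j. \<lfloor>(matrix_inv (rmat A) *v rvec m) $ j\<rfloor>) = n"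
proof -
  obtain f where f: "\<forall>j. 0 \<le> f$j \<and> f$j < 1" "rvec r = rmat A *v f" using r by (auto simp: NN_def)
  have "rvec m = rmat A *v (rvec n + f)"
    by (simp add: m rvec_add f(2) matrix_vector_right_distrib rmat_mv)
  then have "matrix_inv (rmat A) *v rvec m = rvec n + f" by (simp add: inv_apply_real[OF d])
  moreover have "\<lfloor>real_of_int (n$j) + f$j\<rfloor> = n$j" for j
    using f(1) by (intro floor_unique) (auto simp: add.commute)
  ultimately show ?thesis by (simp add: vec_eq_iff)
qed

lemma NN_mult:
  assumes "n \<in> NN P" shows "G *v n \<in> NN (G ** P)"
proof -
  obtain x where x: "\<forall>j. 0 \<le> x$j \<and> x$j < 1" "rvec n = rmat P *v x" using assms by (auto simp: NN_def)
  have "rvec (G *v n) = rmat (G ** P) *v x"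
    by (simp add: rmat_mv[symmetric] x(2) rmat_mul matrix_vector_mul_assoc)
  then show ?thesis using x(1) by (auto simp: NN_def)
qed

lemma LAT_unimod:
  assumes U: "unimodular U" and x: "x \<in> LAT P" shows "x \<in> LAT (P ** U)"
proof -
  obtain y where y: "x = P *v y" using x by (auto simp: LAT_def)
  obtain z where z: "U *v z = y" using unimod_solve[OF U] by blast
  have "x = (P ** U) *v z" using y z[symmetric] by (simp add: matrix_vector_mul_assoc)
  then show ?thesis by (auto simp: LAT_def)
qed



lemma LAT_add: "x \<in> LAT A \<Longrightarrow> y \<in> LAT A \<Longrightarrow> x + y \<in> LAT A"
  by (auto simp: LAT_def matrix_vector_right_distrib[symmetric])

lemma inv_eq:
  fixes A :: "int^'n^'n"
  assumes d: "det A \<noteq> 0" and e: "matrix_inv (rmat A) *v rvec x = rvec y"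
  shows "x = A *v y"
proof -
  have "rvec x = rmat A *v (matrix_inv (rmat A) *v rvec x)"
    using inv_rmat(2)[OF d] by (simp add: matrix_vector_mul_assoc)
  also have "\<dots> = rvec (A *v y)" by (simp add: e rmat_mv)
  finally show ?thesis by (rule rvec_inj)
qed

lemma nrm_sum:
  assumes n: "is_norm nrm" and f: "finite S"
  shows "nrm (\<Sum>i\<in>S. f i) \<le> (\<Sum>i\<in>S. nrm (f i))"
  using f
proof (induct S rule: finite_induct)
  case empty then show ?case using norm_props(1)[OF n] by simp
next
  case (insert x F)
  then show ?case using norm_props(4)[OF n, of "f x" "sum f F"] by simp
qed



theorem theorem3:
  fixes nrm :: "real^'d \<Rightarrow> real"
    and Q :: "real^'d \<Rightarrow> real^'d"
    and M U1 :: "int^'d^'d"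
    and G :: "nat \<Rightarrow> int^'d^'d"
    and L :: nat
    and m :: "int^'d"
    and r n rt :: "nat \<Rightarrow> int^'d"
  assumes norm: "is_norm nrm"
    and QM: "is_closest_map nrm M Q"
    and L2: "L \<ge> 2"
    and Mns: "nonsingular M"
    and Gns: "\<forall>i\<in>{1..L}. nonsingular (G i)"
    and Gcomm: "\<forall>i\<in>{1..L}. \<forall>j\<in>{1..L}. i \<noteq> j \<longrightarrow> G i ** G j = G j ** G i"
    and Gcop: "\<forall>i\<in>{1..L}. \<forall>j\<in>{1..L}. i \<noteq> j \<longrightarrow> coprime_mat (G i) (G j)"
    and U1: "unimodular U1"
    and mA: "m \<in> A1set M G L U1"
    and rdef: "\<forall>i\<in>{1..L}. r i = remd m (M ** G i)"
    and ndef: "\<forall>i\<in>{1..L}. m = (M ** G i) *v n i + r i"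
  shows "((\<forall>i\<in>{1..L}. alg1 Q M G L U1 rt i = rvec (n i)) \<longleftrightarrow>
            (\<forall>i\<in>{2..L}. Q (rvec ((rt i - r i) - (rt 1 - r 1))) = 0))
       \<and> ((\<forall>i\<in>{2..L}. nrm (rvec ((rt i - r i) - (rt 1 - r 1))) < lat_min nrm M / 2) \<longrightarrow>
            (\<forall>i\<in>{2..L}. Q (rvec ((rt i - r i) - (rt 1 - r 1))) = 0))
       \<and> (\<forall>\<tau>::real. (\<forall>i\<in>{1..L}. nrm (rvec (rt i - r i)) \<le> \<tau>) \<and> \<tau> < lat_min nrm M / 4 \<longrightarrow>
            (\<forall>i\<in>{2..L}. Q (rvec ((rt i - r i) - (rt 1 - r 1))) = 0))
       \<and> (\<forall>\<tau>::real. (\<forall>i\<in>{1..L}. alg1 Q M G L U1 rt i = rvec (n i)) \<and>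
            (\<forall>i\<in>{1..L}. nrm (rvec (rt i - r i)) \<le> \<tau>) \<longrightarrow>
            nrm ((1 / real L) *\<^sub>R (\<Sum>i\<in>{1..L}. rmat (M ** G i) *v alg1 Q M G L U1 rt i + rvec (rt i))
                 - rvec m) \<le> \<tau>)"
proof -
  have dM: "det M \<noteq> 0" using Mns by (simp add: nonsingular_def)
  have dG: "\<forall>i\<in>{1..L}. det (G i) \<noteq> 0" using Gns by (simp add: nonsingular_def)
  have dMG: "det (M ** G i) \<noteq> 0" if "i \<in> {1..L}" for i using dM dG that by (simp add: det_mul)
  have L1: "1 \<in> {1..L}" using L2 by simp
  define w where "w i = rvec ((rt i - r i) - (rt 1 - r 1))" for i
  define s where "s i = G 1 *v n 1 - G i *v n i" for i
  define chi where "chi = alg_chi Q M G L U1 rt"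
  define ell where "ell i = lat_coords M (alg_v Q rt i)" for i
  have rdiff: "r i - r 1 = M *v s i" if "i \<in> {1..L}" for i
  proof -
    have "(M ** G i) *v n i + r i = (M ** G 1) *v n 1 + r 1" using ndef that L1 by metis
    then have "r i - r 1 = (M ** G 1) *v n 1 - (M ** G i) *v n i" by (simp add: algebra_simps)
    then show ?thesis by (simp add: s_def matrix_vector_mult_diff_distrib matrix_vector_mul_assoc)
  qed
  have av: "\<exists>t. Q (w i) = rvec (M *v t) \<and> ell i = t + s i" if "i \<in> {1..L}" for i
  proof -
    obtain v where v: "v \<in> LAT M" "Q (w i) = rvec v" using QM unfolding is_closest_map_def by blast
    obtain t where t: "v = M *v t" using v(1) by (auto simp: LAT_def)
    have e: "rt i - rt 1 = ((rt i - r i) - (rt 1 - r 1)) + M *v s i"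
      by (simp add: rdiff[OF that, symmetric] algebra_simps)
    have "rvec (rt i - rt 1) = w i + rvec (M *v s i)"
      unfolding w_def by (subst e) (rule rvec_add)
    then have "alg_v Q rt i = Q (w i) + rvec (M *v s i)"
      using QM LAT_mem[of M "s i"] unfolding alg_v_def is_closest_map_def by simp
    also have "\<dots> = rvec (M *v (t + s i))"
      by (simp add: v(2) t matrix_vector_right_distrib rvec_add)
    finally have "ell i = t + s i" by (simp add: ell_def lat_coords_eq[OF dM])
    then show ?thesis using v t by blast
  qed
  have alg1_1: "alg1 Q M G L U1 rt 1 = matrix_inv (rmat (G 1)) *v rvec chi"
    by (simp add: alg1_def chi_def)
  have alg1_i: "alg1 Q M G L U1 rt i = matrix_inv (rmat (G i)) *v rvec (chi - ell i)" if "i \<noteq> 1" for i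
    using that by (simp add: alg1_def chi_def ell_def)
  have lcopG: "\<forall>i\<in>{1..L}. \<forall>j\<in>{1..L}. i \<noteq> j \<longrightarrow> G i ** G j = G j ** G i \<and> lcop (G i) (G j)"
    using Gcomm Gcop cop_lcop by blast
  have part0: "(\<forall>i\<in>{1..L}. alg1 Q M G L U1 rt i = rvec (n i)) \<longleftrightarrow> (\<forall>i\<in>{2..L}. Q (w i) = 0)"
  proof
    assume all: "\<forall>i\<in>{1..L}. alg1 Q M G L U1 rt i = rvec (n i)"
    have chi1: "chi = G 1 *v n 1"
      using all L1 alg1_1 inv_eq[OF dG[rule_format, OF L1]] by metis
    show "\<forall>i\<in>{2..L}. Q (w i) = 0"
    proof
      fix i assume i: "i \<in> {2..L}"
      then have i1: "i \<in> {1..L}" "i \<noteq> 1" by auto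
      have "chi - ell i = G i *v n i"
        using all i1 alg1_i[OF i1(2)] inv_eq[OF dG[rule_format, OF i1(1)]] by metis
      then have "ell i = s i" using chi1 by (simp add: s_def algebra_simps)
      moreover obtain t where "Q (w i) = rvec (M *v t)" "ell i = t + s i" using av[OF i1(1)] by blast
      ultimately show "Q (w i) = 0" by simp
    qed
  next
    assume all: "\<forall>i\<in>{2..L}. Q (w i) = 0"
    have ells: "ell i = s i" if "i \<in> {2..L}" for i
    proof -
      have i1: "i \<in> {1..L}" using that by auto
      obtain t where t: "Q (w i) = rvec (M *v t)" "ell i = t + s i" using av[OF i1] by blast
      have "M *v t = M *v 0" using t(1) all that rvec_inj by (metis mv_zero rvec_0)
      then have "t = 0" by (rule int_cancel[OF dM])
      then show ?thesis using t by simp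
    qed
    let ?P = "mprod G 1 L ** U1"
    have dU: "det U1 \<noteq> 0" using U1 by (auto simp: unimodular_def)
    have dP: "det ?P \<noteq> 0"
      using mprod_det[of 1 L G] dG dU by (simp add: det_mul)
    have r1N: "r 1 \<in> NN (M ** G 1)" using remd_props[OF dMG[OF L1]] rdef L1 by simp
    have n1N: "n 1 \<in> NN (mprod G 2 L ** U1)"
    proof -
      have m1: "m = (M ** G 1) *v n 1 + r 1" using ndef L1 by blast
      have "(\<chi> j. \<lfloor>(matrix_inv (rmat (M ** G 1)) *v rvec m) $ j\<rfloor>) = n 1"
        by (rule floor_vec[OF dMG[OF L1] r1N m1])
      then show ?thesis using mA by (simp add: A1set_def)
    qed
    have "G 1 *v n 1 \<in> NN (G 1 ** (mprod G 2 L ** U1))" by (rule NN_mult[OF n1N])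
    moreover have "mprod G 1 L = G 1 ** mprod G 2 L" using L2 mprod_cons[of 1 L G] by (simp add: numeral_2_eq_2)
    ultimately have c1N: "G 1 *v n 1 \<in> NN ?P" by (simp add: matrix_mul_assoc)
    have rem: "x - remd x (G i) \<in> LAT (G i)" if "i \<in> {1..L}" for i x
      using remd_props[OF dG[rule_format, OF that]] by simp
    have Pc1: "G 1 *v n 1 \<in> NN ?P \<and> congr_mod (G 1 *v n 1) 0 (G 1) \<and>
      (\<forall>i\<in>{2..L}. congr_mod (G 1 *v n 1) (remd (lat_coords M (alg_v Q rt i)) (G i)) (G i))"
    proof (intro conjI ballI)
      show "G 1 *v n 1 \<in> NN ?P" by (rule c1N)
      show "congr_mod (G 1 *v n 1) 0 (G 1)" by (simp add: congr_mod_def LAT_mem)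
      fix i assume i: "i \<in> {2..L}"
      then have i1: "i \<in> {1..L}" by auto
      have "G 1 *v n 1 - remd (s i) (G i) = (s i - remd (s i) (G i)) + G i *v n i"
        by (simp add: s_def algebra_simps)
      moreover have "(s i - remd (s i) (G i)) + G i *v n i \<in> LAT (G i)"
        by (rule LAT_add[OF rem[OF i1] LAT_mem])
      ultimately have "G 1 *v n 1 - remd (s i) (G i) \<in> LAT (G i)" by (simp only:)
      then show "congr_mod (G 1 *v n 1) (remd (lat_coords M (alg_v Q rt i)) (G i)) (G i)"
        using ells[OF i] by (simp add: congr_mod_def ell_def)
    qed
    have chi1: "chi = G 1 *v n 1"
      unfolding chi_def alg_chi_def
    proof (rule the_equality)
      show "G 1 *v n 1 \<in> NN ?P \<and> congr_mod (G 1 *v n 1) 0 (G 1) \<and>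
        (\<forall>i\<in>{2..L}. congr_mod (G 1 *v n 1) (remd (lat_coords M (alg_v Q rt i)) (G i)) (G i))"
        by (rule Pc1)
      fix c assume c: "c \<in> NN ?P \<and> congr_mod c 0 (G 1) \<and>
        (\<forall>i\<in>{2..L}. congr_mod c (remd (lat_coords M (alg_v Q rt i)) (G i)) (G i))"
      have "c - G 1 *v n 1 \<in> LAT (G i)" if i: "i \<in> {1..L}" for i
      proof (cases "i = 1")
        case True
        have "c \<in> LAT (G 1)" using c by (simp add: congr_mod_def)
        then show ?thesis using True LAT_diff[OF _ LAT_mem] by blast
      next
        case False
        then have i2: "i \<in> {2..L}" using i by auto
        have "c - G 1 *v n 1 = (c - remd (lat_coords M (alg_v Q rt i)) (G i))
                 - (G 1 *v n 1 - remd (lat_coords M (alg_v Q rt i)) (G i))" by simp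
        then show ?thesis using c Pc1 i2 LAT_diff unfolding congr_mod_def by metis
      qed
      then have "c - G 1 *v n 1 \<in> LAT (mprod G 1 L)"
        using mprod_crt[of 1 L G] dG lcopG by blast
      then have "c - G 1 *v n 1 \<in> LAT ?P" by (rule LAT_unimod[OF U1])
      then show "c = G 1 *v n 1" using NN_unique[OF dP _ c1N] c by blast
    qed
    show "\<forall>i\<in>{1..L}. alg1 Q M G L U1 rt i = rvec (n i)"
    proof
      fix i assume i: "i \<in> {1..L}"
      show "alg1 Q M G L U1 rt i = rvec (n i)"
      proof (cases "i = 1")
        case True
        then show ?thesis using alg1_1 chi1 inv_apply[OF dG[rule_format, OF L1]] by simp
      next
        case False
        then have i2: "i \<in> {2..L}" using i by auto
        have "chi - ell i = G i *v n i" using chi1 ells[OF i2] by (simp add: s_def)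
        then show ?thesis using alg1_i[OF False] inv_apply[OF dG[rule_format, OF i]] by simp
      qed
    qed
  qed
  have part1: "(\<forall>i\<in>{2..L}. nrm (w i) < lat_min nrm M / 2) \<longrightarrow> (\<forall>i\<in>{2..L}. Q (w i) = 0)"
    using Q_zero[OF norm QM] by blast
  have part2: "\<forall>\<tau>::real. (\<forall>i\<in>{1..L}. nrm (rvec (rt i - r i)) \<le> \<tau>) \<and> \<tau> < lat_min nrm M / 4 \<longrightarrow>
            (\<forall>i\<in>{2..L}. Q (w i) = 0)"
  proof (intro allI impI ballI)
    fix \<tau> :: real and i
    assume h: "(\<forall>i\<in>{1..L}. nrm (rvec (rt i - r i)) \<le> \<tau>) \<and> \<tau> < lat_min nrm M / 4"
      and i: "i \<in> {2..L}"
    have "w i = rvec (rt i - r i) - rvec (rt 1 - r 1)" by (simp add: w_def rvec_diff)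
    then have "nrm (w i) \<le> nrm (rvec (rt i - r i)) + nrm (rvec (rt 1 - r 1))"
      using norm_props(5)[OF norm] by simp
    also have "\<dots> \<le> \<tau> + \<tau>" using h i L1 by (intro add_mono) auto
    finally have "nrm (w i) < lat_min nrm M / 2" using h by simp
    then show "Q (w i) = 0" by (rule Q_zero[OF norm QM])
  qed
  have part3: "\<forall>\<tau>::real. (\<forall>i\<in>{1..L}. alg1 Q M G L U1 rt i = rvec (n i)) \<and>
            (\<forall>i\<in>{1..L}. nrm (rvec (rt i - r i)) \<le> \<tau>) \<longrightarrow>
            nrm ((1 / real L) *\<^sub>R (\<Sum>i\<in>{1..L}. rmat (M ** G i) *v alg1 Q M G L U1 rt i + rvec (rt i))
                 - rvec m) \<le> \<tau>"
  proof (intro allI impI)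
    fix \<tau> :: real
    assume h: "(\<forall>i\<in>{1..L}. alg1 Q M G L U1 rt i = rvec (n i)) \<and>
            (\<forall>i\<in>{1..L}. nrm (rvec (rt i - r i)) \<le> \<tau>)"
    have Lp: "real L > 0" using L2 by simp
    have trm: "rmat (M ** G i) *v alg1 Q M G L U1 rt i + rvec (rt i) = rvec m + rvec (rt i - r i)"
      if i: "i \<in> {1..L}" for i
    proof -
      have "rmat (M ** G i) *v alg1 Q M G L U1 rt i + rvec (rt i) = rvec ((M ** G i) *v n i + (rt i - r i) + r i)"
        using h i by (simp add: rmat_mv rvec_add)
      also have "\<dots> = rvec (m + (rt i - r i))" using ndef i by (simp add: algebra_simps)
      finally show ?thesis by (simp add: rvec_add)
    qed
    have "(\<Sum>i\<in>{1..L}. rmat (M ** G i) *v alg1 Q M G L U1 rt i + rvec (rt i))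
        = (\<Sum>i\<in>{1..L}. rvec m + rvec (rt i - r i))" by (rule sum.cong) (simp_all add: trm)
    also have "\<dots> = real L *\<^sub>R rvec m + (\<Sum>i\<in>{1..L}. rvec (rt i - r i))"
      by (simp add: sum.distrib sum_constant_scaleR del: sum_constant)
    finally have "(1 / real L) *\<^sub>R (\<Sum>i\<in>{1..L}. rmat (M ** G i) *v alg1 Q M G L U1 rt i + rvec (rt i))
                 - rvec m = (1 / real L) *\<^sub>R (\<Sum>i\<in>{1..L}. rvec (rt i - r i))"
      using Lp by (simp add: scaleR_add_right)
    moreover have "nrm ((1 / real L) *\<^sub>R (\<Sum>i\<in>{1..L}. rvec (rt i - r i))) \<le> \<tau>"
    proof -
      have "nrm ((1 / real L) *\<^sub>R (\<Sum>i\<in>{1..L}. rvec (rt i - r i)))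
          = (1 / real L) * nrm (\<Sum>i\<in>{1..L}. rvec (rt i - r i))"
        using norm Lp unfolding is_norm_def by simp
      also have "\<dots> \<le> (1 / real L) * (\<Sum>i\<in>{1..L}. nrm (rvec (rt i - r i)))"
        using nrm_sum[OF norm] Lp by (intro mult_left_mono) auto
      also have "\<dots> \<le> (1 / real L) * (\<Sum>i\<in>{1..L}. \<tau>)"
        using h Lp by (intro mult_left_mono sum_mono) auto
      also have "\<dots> = \<tau>" using Lp by simp
      finally show ?thesis .
    qed
    ultimately show "nrm ((1 / real L) *\<^sub>R (\<Sum>i\<in>{1..L}. rmat (M ** G i) *v alg1 Q M G L U1 rt i + rvec (rt i))
                 - rvec m) \<le> \<tau>" by simp
  qed
  show ?thesis using part0 part1 part2 part3 unfolding w_def by blast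
qed

end
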